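(* Let $P$ be a finite ranked poset with rank function $r$, let $P^*\subseteq P$ be a set of marked elements with $\min(P)\cup\max(P)\subseteq P^*$, and let $\lambda^r\colon P^*\to\mathbb{Z}$ be given by $\lambda^r(a)=r(a)$. Then for every partition $P\setminus P^*=C\sqcup O$, the marked chain-order polytope $\mathcal{O}_{C,O}(P,\lambda^r)$, regarded as a subset of $\mathbb{R}^{P\setminus P^*}$, has a unique interior lattice point.
   Context: A rank function on a poset $P$ is a map $r\colon P\to\mathbb{Z}$ with $r(p)=r(q)-1$ for every covering relation $p\prec q$; $P$ is ranked if it has one. For an order-preserving $\lambda\colon P^*\to\mathbb{R}$ and a partition $P\setminus P^*=C\sqcup O$, $\mathcal{O}_{C,O}(P,\lambda)\subseteq\mathbb{R}^P$ is the set of all $\mathbf{x}$ with: (1) $x_a=\lambda(a)$ for $a\in P^*$; (2) $x_p\ge0$ for $p\in C$; (3) $x_{p_1}+\cdots+x_{p_r}\le x_b-x_a$ for every saturated chain $a\prec p_1\prec\cdots\prec p_r\prec b$ in $P$ with $a,b\in P^*\sqcup O$, all $p_i\in C$, $r\ge0$. It is regarded as a subset of $\mathbb{R}^{P\setminus P^*}$ via projection onto the unmarked coordinates; "interior" means interior in $\mathbb{R}^{P\setminus P^*}$ and lattice points are points of $\mathbb{Z}^{P\setminus P^*}$. *)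

theory Defs
  imports "HOL-Analysis.Analysis"
begin

text \<open>A finite poset is modelled as a finite carrier set P inside an ordered type, with the
induced order.\<close>

definition covers :: "'a::order set \<Rightarrow> 'a \<Rightarrow> 'a \<Rightarrow> bool" where
  "covers P p q \<longleftrightarrow> p \<in> P \<and> q \<in> P \<and> p < q \<and> \<not> (\<exists>z\<in>P. p < z \<and> z < q)"

definition is_rank_function :: "'a::order set \<Rightarrow> ('a \<Rightarrow> int) \<Rightarrow> bool" where
  "is_rank_function P r \<longleftrightarrow> (\<forall>p q. covers P p q \<longrightarrow> r p = r q - 1)"

definition min_elems :: "'a::order set \<Rightarrow> 'a set" where
  "min_elems P = {p \<in> P. \<not> (\<exists>q\<in>P. q < p)}"

definition max_elems :: "'a::order set \<Rightarrow> 'a set" where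
  "max_elems P = {p \<in> P. \<not> (\<exists>q\<in>P. p < q)}"

definition saturated_chain :: "'a::order set \<Rightarrow> 'a list \<Rightarrow> bool" where
  "saturated_chain P cs \<longleftrightarrow> 2 \<le> length cs \<and>
     (\<forall>i. Suc i < length cs \<longrightarrow> covers P (cs ! i) (cs ! Suc i))"

text \<open>The marked chain-order polytope, as a set of points of R^P (functions vanishing off P).
The inner elements of a chain cs are butlast (tl cs).\<close>
definition marked_chain_order_polytope ::
  "'a::order set \<Rightarrow> 'a set \<Rightarrow> ('a \<Rightarrow> real) \<Rightarrow> 'a set \<Rightarrow> 'a set \<Rightarrow> ('a \<Rightarrow> real) set" where
  "marked_chain_order_polytope P Pstar lam C Op =
     {x. (\<forall>p. p \<notin> P \<longrightarrow> x p = 0)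
       \<and> (\<forall>a\<in>Pstar. x a = lam a)
       \<and> (\<forall>p\<in>C. 0 \<le> x p)
       \<and> (\<forall>cs. saturated_chain P cs \<and> hd cs \<in> Pstar \<union> Op \<and> last cs \<in> Pstar \<union> Op
               \<and> set (butlast (tl cs)) \<subseteq> C
               \<longrightarrow> sum_list (map x (butlast (tl cs))) \<le> x (last cs) - x (hd cs))}"

definition coord_space :: "'a set \<Rightarrow> ('a \<Rightarrow> real) set" where
  "coord_space U = {y. \<forall>p. p \<notin> U \<longrightarrow> y p = 0}"

definition proj_coords :: "'a set \<Rightarrow> ('a \<Rightarrow> real) \<Rightarrow> ('a \<Rightarrow> real)" where
  "proj_coords U x = (\<lambda>p. if p \<in> U then x p else 0)"

definition interior_in_coords :: "'a set \<Rightarrow> ('a \<Rightarrow> real) set \<Rightarrow> ('a \<Rightarrow> real) set" where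
  "interior_in_coords U S =
     {y. \<exists>T. openin (top_of_set (coord_space U)) T \<and> y \<in> T \<and> T \<subseteq> S}"

definition lattice_points :: "'a set \<Rightarrow> ('a \<Rightarrow> real) set" where
  "lattice_points U = {y \<in> coord_space U. \<forall>p\<in>U. y p \<in> \<int>}"

end

theory Submission
  imports Defs
begin

lemma sat_iff: "saturated_chain P cs \<longleftrightarrow> 2 \<le> length cs \<and> successively (covers P) cs"
  unfolding saturated_chain_def successively_conv_nth by blast

lemma chain_sorted:
  assumes "successively (covers P) cs" shows "sorted_wrt (<) cs"
proof -
  have "successively (<) cs" using assms by (rule successively_mono) (auto simp: covers_def)
  then show ?thesis using successively_conv_sorted_wrt[of "(<)" cs] by (metis order_less_trans transpI)
qed

lemma chain_distinct:
  fixes cs :: "'a::order list"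
  assumes "sorted_wrt (<) cs" shows "distinct cs"
  using assms by (induction cs) auto

lemma chain_set:
  assumes "successively (covers P) cs" "2 \<le> length cs" shows "set cs \<subseteq> P"
  using assms
proof (induction cs rule: induct_list012)
  case (3 x y zs)
  then show ?case by (cases zs) (auto simp: covers_def)
qed auto

lemma chain_rank:
  assumes "is_rank_function P r" "successively (covers P) cs" "cs \<noteq> []"
  shows "r (last cs) - r (hd cs) = int (length cs) - 1"
  using assms(2,3)
proof (induction cs rule: induct_list012)
  case (3 x y zs)
  then have "r x = r y - 1" using assms(1) by (auto simp: is_rank_function_def)
  then show ?case using 3 by auto
qed auto

lemma chain_decomp:
  assumes "2 \<le> length cs"
  shows "cs = hd cs # butlast (tl cs) @ [last cs]"
proof -
  obtain a t where cs: "cs = a # t" using assms by (cases cs) auto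
  then have "t \<noteq> []" using assms by auto
  then show ?thesis using cs by simp
qed

lemma sum_list_bump:
  fixes f g :: "'b \<Rightarrow> real"
  assumes "\<And>q. q \<in> set l \<Longrightarrow> g q \<le> f q" "p \<in> set l"
  shows "sum_list (map g l) + (f p - g p) \<le> sum_list (map f l)"
proof -
  have "f p - g p \<le> sum_list (map (\<lambda>q. f q - g q) l)"
    using assms by (intro member_le_sum_list) auto
  then show ?thesis by (simp add: sum_list_subtractf)
qed

lemma sum_list_Ints:
  assumes "\<And>q. q \<in> set l \<Longrightarrow> (f q :: real) \<in> \<int>"
  shows "sum_list (map f l) \<in> \<int>"
  using assms by (induction l) auto

lemma Ints_less_plus1:
  fixes a b :: real
  assumes "a \<in> \<int>" "b \<in> \<int>" "a < b" shows "a + 1 \<le> b"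
proof -
  obtain m n where "a = of_int m" "b = of_int n" using assms(1,2) Ints_cases by metis
  then show ?thesis using assms(3) by simp
qed

lemma perturb_open:
  fixes y :: "'a \<Rightarrow> real"
  assumes "open S" "y \<in> S"
  shows "\<exists>e>0. \<forall>t. \<bar>t\<bar> < e \<longrightarrow> y(p := y p + t) \<in> S"
proof -
  define g where "g = (\<lambda>t::real. y(p := y p + t))"
  have "continuous_on UNIV g"
    unfolding g_def
  proof (intro continuous_on_coordinatewise_then_product)
    fix i show "continuous_on UNIV (\<lambda>t. (y(p := y p + t)) i)"
      by (cases "i = p") (auto intro!: continuous_intros)
  qed
  then have o: "open (g -` S)" using assms(1) continuous_on_open_vimage[OF open_UNIV] by auto
  have "0 \<in> g -` S" using assms(2) by (simp add: g_def)
  then obtain e where "e > 0" "ball 0 e \<subseteq> g -` S" using o open_contains_ball by blast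
  then show ?thesis by (intro exI[of _ e]) (auto simp: g_def dist_real_def)
qed

definition extf :: "'a set \<Rightarrow> 'a set \<Rightarrow> ('a \<Rightarrow> int) \<Rightarrow> ('a \<Rightarrow> real) \<Rightarrow> 'a \<Rightarrow> real" where
  "extf P Pstar r y q = (if q \<in> Pstar then real_of_int (r q) else if q \<in> P then y q else 0)"

context
  fixes P Pstar C Op :: "'a::order set" and r :: "'a \<Rightarrow> int"
  assumes fin: "finite P"
    and rk: "is_rank_function P r"
    and sub: "Pstar \<subseteq> P"
    and mm: "min_elems P \<union> max_elems P \<subseteq> Pstar"
    and part: "C \<union> Op = P - Pstar" and disj: "C \<inter> Op = {}"
begin

abbreviation "rr \<equiv> (\<lambda>a. real_of_int (r a))"
abbreviation "MPoly \<equiv> marked_chain_order_polytope P Pstar rr C Op"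
abbreviation extp where "extp y \<equiv> extf P Pstar r y"

lemma poly_ext: "x \<in> MPoly \<Longrightarrow> x = extp (proj_coords (P - Pstar) x)"
  by (auto simp: marked_chain_order_polytope_def proj_coords_def fun_eq_iff extf_def)

lemma ext_proj: "y \<in> coord_space (P - Pstar) \<Longrightarrow> proj_coords (P - Pstar) (extp y) = y"
  by (auto simp: coord_space_def proj_coords_def fun_eq_iff extf_def)

lemma cover_below:
  assumes "a \<in> P" "q \<in> P" "a < q"
  shows "\<exists>a'. covers P a' q"
proof -
  have "finite {z\<in>P. a \<le> z \<and> z < q}" "{z\<in>P. a \<le> z \<and> z < q} \<noteq> {}" using fin assms by auto
  from finite_has_maximal[OF this] obtain m where m: "m \<in> P" "a \<le> m" "m < q"
    "\<forall>z\<in>{z\<in>P. a \<le> z \<and> z < q}. m \<le> z \<longrightarrow> m = z" by auto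
  have "covers P m q" unfolding covers_def
    using m assms by (metis (mono_tags, lifting) mem_Collect_eq order.strict_iff_not order_trans)
  then show ?thesis by blast
qed

lemma cover_above:
  assumes "a \<in> P" "q \<in> P" "q < a"
  shows "\<exists>a'. covers P q a'"
proof -
  have "finite {z\<in>P. z \<le> a \<and> q < z}" "{z\<in>P. z \<le> a \<and> q < z} \<noteq> {}" using fin assms by auto
  from finite_has_minimal[OF this] obtain m where m: "m \<in> P" "m \<le> a" "q < m"
    "\<forall>z\<in>{z\<in>P. z \<le> a \<and> q < z}. z \<le> m \<longrightarrow> m = z" by auto
  have "covers P q m" unfolding covers_def
    using m assms by (metis (mono_tags, lifting) mem_Collect_eq order.strict_iff_not order_trans)
  then show ?thesis by blast
qed

lemma interior_perturb:
  assumes "y \<in> interior_in_coords (P - Pstar) (proj_coords (P - Pstar) ` MPoly)" "p \<in> P - Pstar"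
  shows "\<exists>e>0. \<forall>t. \<bar>t\<bar> < e \<longrightarrow> extp (y(p := y p + t)) \<in> MPoly"
proof -
  obtain T where T: "openin (top_of_set (coord_space (P - Pstar))) T" "y \<in> T"
    "T \<subseteq> proj_coords (P - Pstar) ` MPoly"
    using assms(1) unfolding interior_in_coords_def by blast
  obtain S where S: "open S" "T = coord_space (P - Pstar) \<inter> S" using T(1) openin_open by blast
  obtain e where e: "e > 0" "\<forall>t. \<bar>t\<bar> < e \<longrightarrow> y(p := y p + t) \<in> S"
    using perturb_open[OF S(1), of y p] S T by blast
  have yc: "y \<in> coord_space (P - Pstar)" using S T by blast
  have "extp (y(p := y p + t)) \<in> MPoly" if "\<bar>t\<bar> < e" for t
  proof -
    have "y(p := y p + t) \<in> coord_space (P - Pstar)" using yc assms(2) by (auto simp: coord_space_def)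
    then have "y(p := y p + t) \<in> T" using e that S by blast
    then obtain x where "x \<in> MPoly" "y(p := y p + t) = proj_coords (P - Pstar) x" using T by blast
    then show ?thesis using poly_ext by metis
  qed
  then show ?thesis using e by blast
qed

lemma interior_coord:
  assumes "y \<in> interior_in_coords (P - Pstar) (proj_coords (P - Pstar) ` MPoly)"
  shows "extp y \<in> MPoly" "y \<in> coord_space (P - Pstar)"
proof -
  obtain T where T: "y \<in> T" "T \<subseteq> proj_coords (P - Pstar) ` MPoly"
    using assms(1) unfolding interior_in_coords_def by blast
  then obtain x where "x \<in> MPoly" "y = proj_coords (P - Pstar) x" by blast
  then show "extp y \<in> MPoly" "y \<in> coord_space (P - Pstar)" using poly_ext
    by (metis, auto simp: coord_space_def proj_coords_def)
qed

lemma poly_chain: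
  assumes "x \<in> MPoly" "saturated_chain P cs" "hd cs \<in> Pstar \<union> Op" "last cs \<in> Pstar \<union> Op"
    "set (butlast (tl cs)) \<subseteq> C"
  shows "sum_list (map x (butlast (tl cs))) \<le> x (last cs) - x (hd cs)"
  using assms unfolding marked_chain_order_polytope_def by blast

lemma poly_C: "x \<in> MPoly \<Longrightarrow> p \<in> C \<Longrightarrow> 0 \<le> x p"
  unfolding marked_chain_order_polytope_def by blast

context
  fixes y
  assumes yi: "y \<in> interior_in_coords (P - Pstar) (proj_coords (P - Pstar) ` MPoly)"
    and yl: "y \<in> lattice_points (P - Pstar)"
begin

lemma F_int: "q \<in> P \<Longrightarrow> extp y q \<in> \<int>"
  using yl by (auto simp: lattice_points_def extf_def)

lemma F1: assumes "p \<in> C" shows "1 \<le> extp y p"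
proof -
  have pU: "p \<in> P - Pstar" using assms part by blast
  obtain e where e: "e > 0" "\<forall>t. \<bar>t\<bar> < e \<longrightarrow> extp (y(p := y p + t)) \<in> MPoly"
    using interior_perturb[OF yi pU] by blast
  have "extp (y(p := y p + - (e/2))) \<in> MPoly" using e(1) e(2)[rule_format, of "-(e/2)"] by auto
  from poly_C[OF this assms] have "0 < y p" using pU e by (simp add: extf_def)
  then have "0 < extp y p" using pU by (simp add: extf_def)
  from Ints_less_plus1[OF _ F_int this] show ?thesis using pU by simp
qed

lemma F2:
  assumes "saturated_chain P cs" "hd cs \<in> Pstar \<union> Op" "last cs \<in> Pstar \<union> Op"
    "set (butlast (tl cs)) \<subseteq> C"
  shows "sum_list (map (extp y) (butlast (tl cs))) + 1 \<le> extp y (last cs) - extp y (hd cs)"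
proof -
  define a where "a = hd cs"
  define b where "b = last cs"
  define l where "l = butlast (tl cs)"
  have len: "2 \<le> length cs" and succ: "successively (covers P) cs" using assms(1) sat_iff by auto
  have cs: "cs = a # l @ [b]" using chain_decomp[OF len] a_def b_def l_def by simp
  have sorted: "sorted_wrt (<) (a # l @ [b])" using chain_sorted[OF succ] cs by simp
  have setP: "set cs \<subseteq> P" using chain_set[OF succ len] .
  have aP: "a \<in> P" and bP: "b \<in> P" and lP: "set l \<subseteq> P" using setP cs by auto
  have lC: "set l \<subseteq> C" using assms(4) l_def by simp
  have ab: "a \<in> Pstar \<union> Op" "b \<in> Pstar \<union> Op" using assms(2,3) a_def b_def by auto
  have strict: "sum_list (map (extp y) l) < extp y b - extp y a"
  proof (cases "l = []")
    case False
    define p where "p = hd l"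
    have pl: "p \<in> set l" using False p_def by simp
    have pU: "p \<in> P - Pstar" using pl lC part by blast
    have ap: "a \<noteq> p" "b \<noteq> p" using sorted pl by (auto simp: sorted_wrt_append)
    obtain e where e: "e > 0" "\<forall>t. \<bar>t\<bar> < e \<longrightarrow> extp (y(p := y p + t)) \<in> MPoly"
      using interior_perturb[OF yi pU] by blast
    define x' where "x' = extp (y(p := y p + e/2))"
    have x'P: "x' \<in> MPoly" using e x'_def by auto
    have c: "sum_list (map x' l) \<le> x' b - x' a"
      using poly_chain[OF x'P assms(1-4)] by (simp only: a_def b_def l_def)
    have "x' b = extp y b" "x' a = extp y a" using ap by (auto simp: x'_def extf_def)
    moreover have "sum_list (map (extp y) l) + (x' p - extp y p) \<le> sum_list (map x' l)"
      using e(1) by (intro sum_list_bump[OF _ pl]) (auto simp: x'_def extf_def)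
    moreover have "x' p - extp y p = e/2" using pU by (simp add: x'_def extf_def)
    ultimately show ?thesis using c e(1) by linarith
  next
    case True
    then have csab: "cs = [a, b]" using cs by simp
    then have cov: "covers P a b" using succ by simp
    show ?thesis
    proof (cases "a \<in> Op")
      case True
      have pU: "a \<in> P - Pstar" using True part by blast
      have ab': "a \<noteq> b" "b \<noteq> a" using cov by (auto simp: covers_def)
      obtain e where e: "e > 0" "\<forall>t. \<bar>t\<bar> < e \<longrightarrow> extp (y(a := y a + t)) \<in> MPoly"
        using interior_perturb[OF yi pU] by blast
      define x' where "x' = extp (y(a := y a + e/2))"
      have x'P: "x' \<in> MPoly" using e x'_def by auto
      have c: "sum_list (map x' l) \<le> x' b - x' a"
        using poly_chain[OF x'P assms(1-4)] by (simp only: a_def b_def l_def)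
      moreover have "x' b = extp y b" "x' a = extp y a + e/2" using ab' pU by (auto simp: x'_def extf_def)
      ultimately show ?thesis using e(1) \<open>l = []\<close> by simp
    next
      case aO: False
      show ?thesis
      proof (cases "b \<in> Op")
        case True
        have pU: "b \<in> P - Pstar" using True part by blast
        have ab': "a \<noteq> b" "b \<noteq> a" using cov by (auto simp: covers_def)
        obtain e where e: "e > 0" "\<forall>t. \<bar>t\<bar> < e \<longrightarrow> extp (y(b := y b + t)) \<in> MPoly"
          using interior_perturb[OF yi pU] by blast
        define x' where "x' = extp (y(b := y b + - (e/2)))"
        have x'P: "x' \<in> MPoly" using e(1) e(2)[rule_format, of "-(e/2)"] x'_def by auto
        have c: "sum_list (map x' l) \<le> x' b - x' a"
          using poly_chain[OF x'P assms(1-4)] by (simp only: a_def b_def l_def)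
        moreover have "x' a = extp y a" "x' b = extp y b - e/2" using ab' pU by (auto simp: x'_def extf_def)
        ultimately show ?thesis using e(1) \<open>l = []\<close> by simp
      next
        case False
        then have "a \<in> Pstar" "b \<in> Pstar" using aO ab by auto
        moreover have "r b - r a = 1" using chain_rank[OF rk succ] csab by simp
        ultimately show ?thesis using \<open>l = []\<close> by (simp add: extf_def)
      qed
    qed
  qed
  have "sum_list (map (extp y) l) \<in> \<int>" using lP by (intro sum_list_Ints F_int) auto
  moreover have "extp y b - extp y a \<in> \<int>" using aP bP F_int by auto
  ultimately show ?thesis using Ints_less_plus1 strict a_def b_def l_def by blast
qed

lemma Down:
  assumes "q \<in> P"
  shows "\<exists>b ts. b \<in> Pstar \<union> Op \<and> set ts \<subseteq> C \<and> successively (covers P) (b # ts)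
     \<and> last (b # ts) = q \<and> 0 \<le> extp y b - rr b + sum_list (map (\<lambda>p. extp y p - 1) ts)"
  using assms
proof (induction "card {a\<in>P. a < q}" arbitrary: q rule: less_induct)
  case less
  show ?case
  proof (cases "\<exists>a\<in>P. a < q")
    case False
    then have "q \<in> Pstar" using less.prems mm by (auto simp: min_elems_def)
    then show ?thesis by (intro exI[of _ q] exI[of _ "[]"]) (auto simp: extf_def)
  next
    case True
    then obtain a' where cov: "covers P a' q" using cover_below less.prems by blast
    then have a'P: "a' \<in> P" and a'q: "a' < q" by (auto simp: covers_def)
    have "{a\<in>P. a < a'} \<subset> {a\<in>P. a < q}" using a'P a'q by auto
    then have "card {a\<in>P. a < a'} < card {a\<in>P. a < q}" using fin by (intro psubset_card_mono) auto
    from less.hyps[OF this a'P] obtain b ts where bt: "b \<in> Pstar \<union> Op" "set ts \<subseteq> C"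
      "successively (covers P) (b # ts)" "last (b # ts) = a'"
      "0 \<le> extp y b - rr b + sum_list (map (\<lambda>p. extp y p - 1) ts)" by blast
    have succ: "successively (covers P) (b # ts @ [q])"
      using bt(3,4) cov successively_append_iff[of _ "b # ts" "[q]"] by simp
    show ?thesis
    proof (cases "q \<in> C")
      case True
      have "1 \<le> extp y q" using F1[OF True] .
      then show ?thesis using bt succ True
        by (intro exI[of _ b] exI[of _ "ts @ [q]"]) auto
    next
      case False
      then have qs: "q \<in> Pstar \<union> Op" using less.prems part by blast
      have sat: "saturated_chain P (b # ts @ [q])" using succ by (simp add: sat_iff)
      have f2: "sum_list (map (extp y) ts) + 1 \<le> extp y q - extp y b"
        using F2[OF sat] bt qs by simp
      have "r q - r b = int (length ts) + 1" using chain_rank[OF rk succ] by simp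
      then have "rr q - rr b = real (length ts) + 1" by (metis of_int_add of_int_diff of_int_of_nat_eq of_int_1)
      moreover have "sum_list (map (\<lambda>p. extp y p - 1) ts) = sum_list (map (extp y) ts) - real (length ts)"
        by (simp add: sum_list_subtractf sum_list_triv)
      ultimately have "0 \<le> extp y q - rr q" using f2 bt(5) by linarith
      then show ?thesis using qs by (intro exI[of _ q] exI[of _ "[]"]) auto
    qed
  qed
qed

lemma Up:
  assumes "q \<in> P"
  shows "\<exists>b ts. b \<in> Pstar \<union> Op \<and> set ts \<subseteq> C \<and> successively (covers P) (ts @ [b])
     \<and> hd (ts @ [b]) = q \<and> extp y b - rr b - sum_list (map (\<lambda>p. extp y p - 1) ts) \<le> 0"
  using assms
proof (induction "card {a\<in>P. q < a}" arbitrary: q rule: less_induct)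
  case less
  show ?case
  proof (cases "\<exists>a\<in>P. q < a")
    case False
    then have "q \<in> Pstar" using less.prems mm by (auto simp: max_elems_def)
    then show ?thesis by (intro exI[of _ q] exI[of _ "[]"]) (auto simp: extf_def)
  next
    case True
    then obtain a' where cov: "covers P q a'" using cover_above less.prems by blast
    then have a'P: "a' \<in> P" and a'q: "q < a'" by (auto simp: covers_def)
    have "{a\<in>P. a' < a} \<subset> {a\<in>P. q < a}" using a'P a'q by auto
    then have "card {a\<in>P. a' < a} < card {a\<in>P. q < a}" using fin by (intro psubset_card_mono) auto
    from less.hyps[OF this a'P] obtain b ts where bt: "b \<in> Pstar \<union> Op" "set ts \<subseteq> C"
      "successively (covers P) (ts @ [b])" "hd (ts @ [b]) = a'"
      "extp y b - rr b - sum_list (map (\<lambda>p. extp y p - 1) ts) \<le> 0" by blast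
    have succ: "successively (covers P) (q # ts @ [b])"
      using bt(3,4) cov successively_Cons[of _ q "ts @ [b]"] by simp
    show ?thesis
    proof (cases "q \<in> C")
      case True
      have "1 \<le> extp y q" using F1[OF True] .
      then show ?thesis using bt succ True
        by (intro exI[of _ b] exI[of _ "q # ts"]) auto
    next
      case False
      then have qs: "q \<in> Pstar \<union> Op" using less.prems part by blast
      have sat: "saturated_chain P (q # ts @ [b])" using succ by (simp add: sat_iff)
      have f2: "sum_list (map (extp y) ts) + 1 \<le> extp y b - extp y q"
        using F2[OF sat] bt qs by simp
      have "r b - r q = int (length ts) + 1" using chain_rank[OF rk succ] by simp
      then have "rr b - rr q = real (length ts) + 1" by (metis of_int_add of_int_diff of_int_of_nat_eq of_int_1)
      moreover have "sum_list (map (\<lambda>p. extp y p - 1) ts) = sum_list (map (extp y) ts) - real (length ts)"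
        by (simp add: sum_list_subtractf sum_list_triv)
      ultimately have "extp y q - rr q \<le> 0" using f2 bt(5) by linarith
      then show ?thesis using qs by (intro exI[of _ q] exI[of _ "[]"]) auto
    qed
  qed
qed

lemma O_val: assumes "q \<in> Pstar \<union> Op" shows "extp y q = rr q"
proof -
  have qP: "q \<in> P" using assms sub part by blast
  have qC: "q \<notin> C" using assms part disj by blast
  obtain b ts where d: "set ts \<subseteq> C" "last (b # ts) = q"
     "0 \<le> extp y b - rr b + sum_list (map (\<lambda>p. extp y p - 1) ts)" using Down[OF qP] by blast
  have "ts = []" using d qC by (metis last_ConsR last_in_set subsetD)
  moreover have "b = q" using d(2) \<open>ts = []\<close> by simp
  ultimately have 1: "0 \<le> extp y q - rr q" using d(3) by simp
  obtain b' ts' where u: "set ts' \<subseteq> C" "hd (ts' @ [b']) = q"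
     "extp y b' - rr b' - sum_list (map (\<lambda>p. extp y p - 1) ts') \<le> 0" using Up[OF qP] by blast
  have "ts' = []" using u qC by (metis hd_append2 hd_in_set subsetD)
  moreover have "b' = q" using u(2) \<open>ts' = []\<close> by simp
  ultimately have "extp y q - rr q \<le> 0" using u(3) by simp
  then show ?thesis using 1 by simp
qed

lemma C_val: assumes "q \<in> C" shows "extp y q = 1"
proof -
  have qP: "q \<in> P" using assms part by blast
  have qs: "q \<notin> Pstar \<union> Op" using assms part disj by blast
  obtain b1 ts1 where d: "b1 \<in> Pstar \<union> Op" "set ts1 \<subseteq> C" "successively (covers P) (b1 # ts1)"
    "last (b1 # ts1) = q" using Down[OF qP] by blast
  obtain b2 ts2 where u: "b2 \<in> Pstar \<union> Op" "set ts2 \<subseteq> C" "successively (covers P) (ts2 @ [b2])"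
    "hd (ts2 @ [b2]) = q" using Up[OF qP] by blast
  have "ts1 \<noteq> []" using d qs by auto
  then have q1: "q \<in> set ts1" using d(4) by (metis last_ConsR last_in_set)
  have "ts2 \<noteq> []" using u qs by auto
  then obtain ts2' where ts2: "ts2 = q # ts2'" using u(4) by (cases ts2) auto
  have s2: "successively (covers P) (q # ts2' @ [b2])" using u(3) ts2 by simp
  then have s2': "successively (covers P) (ts2' @ [b2])" "covers P q (hd (ts2' @ [b2]))"
    using successively_Cons[of _ q "ts2' @ [b2]"] by auto
  define cs where "cs = (b1 # ts1) @ (ts2' @ [b2])"
  have link: "covers P (last (b1 # ts1)) (hd (ts2' @ [b2]))" by (subst d(4)) (rule s2'(2))
  have succ: "successively (covers P) cs"
    unfolding cs_def using successively_append_iff[of "covers P" "b1 # ts1" "ts2' @ [b2]"] d(3) s2'(1) link by blast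
  have cs2: "cs = b1 # (ts1 @ ts2') @ [b2]" by (simp add: cs_def)
  have sat: "saturated_chain P cs" using succ cs2 by (simp add: sat_iff)
  have inner: "butlast (tl cs) = ts1 @ ts2'" by (simp add: cs2 butlast_append)
  have f2: "sum_list (map (extp y) (ts1 @ ts2')) + 1 \<le> extp y b2 - extp y b1"
    using F2[OF sat] d u ts2 inner cs2 by simp
  have "r b2 - r b1 = int (length (ts1 @ ts2')) + 1" using chain_rank[OF rk succ] cs2 by simp
  then have "rr b2 - rr b1 = real (length (ts1 @ ts2')) + 1" by (metis of_int_add of_int_diff of_int_of_nat_eq of_int_1)
  moreover have "sum_list (map (\<lambda>p. extp y p - 1) (ts1 @ ts2')) = sum_list (map (extp y) (ts1 @ ts2')) - real (length (ts1 @ ts2'))"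
    by (simp add: sum_list_subtractf sum_list_triv)
  moreover have "extp y b1 = rr b1" "extp y b2 = rr b2" using O_val d(1) u(1) by auto
  ultimately have le: "sum_list (map (\<lambda>p. extp y p - 1) (ts1 @ ts2')) \<le> 0" using f2 by linarith
  have C12: "set (ts1 @ ts2') \<subseteq> C" using d(2) u(2) ts2 by auto
  have "extp y q - 1 \<le> sum_list (map (\<lambda>p. extp y p - 1) (ts1 @ ts2'))"
    using q1 C12 F1 by (intro member_le_sum_list) auto
  then show ?thesis using le F1[OF assms] by simp
qed

lemma y_eq: "y = (\<lambda>q. if q \<in> C then 1 else if q \<in> P - Pstar then rr q else 0)"
proof
  fix q
  have yc: "y \<in> coord_space (P - Pstar)" using interior_coord[OF yi] by blast
  show "y q = (if q \<in> C then 1 else if q \<in> P - Pstar then rr q else 0)"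
  proof (cases "q \<in> P - Pstar")
    case False
    then show ?thesis using yc part by (auto simp: coord_space_def)
  next
    case True
    then have eq: "extp y q = y q" by (simp add: extf_def)
    show ?thesis
    proof (cases "q \<in> C")
      case True
      then show ?thesis using C_val[OF True] eq by simp
    next
      case False
      then have "q \<in> Op" using True part by blast
      then show ?thesis using O_val[of q] eq False True by simp
    qed
  qed
qed

end

lemma existence:
  defines "y0 \<equiv> (\<lambda>q. if q \<in> C then 1 else if q \<in> P - Pstar then rr q else 0)"
  shows "y0 \<in> interior_in_coords (P - Pstar) (proj_coords (P - Pstar) ` MPoly)
    \<and> y0 \<in> lattice_points (P - Pstar)"
proof
  have y0c: "y0 \<in> coord_space (P - Pstar)" using part by (auto simp: coord_space_def y0_def)
  show "y0 \<in> lattice_points (P - Pstar)" using y0c by (auto simp: lattice_points_def y0_def)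
  define d where "d = 1 / (real (card P) + 2)"
  have d0: "0 < d" by (simp add: d_def)
  have d1: "d \<le> 1/2" by (simp add: d_def field_simps)
  have dn: "real (card P) * d \<le> 1" by (simp add: d_def field_simps)
  define S where "S = (\<Inter>p\<in>P - Pstar. (\<lambda>z::'a\<Rightarrow>real. z p) -` ball (y0 p) d)"
  have "open S" unfolding S_def
  proof (intro open_INT ballI)
    show "finite (P - Pstar)" using fin by simp
    fix p
    show "open ((\<lambda>z::'a\<Rightarrow>real. z p) -` ball (y0 p) d)"
      using continuous_on_open_vimage[OF open_UNIV, of "\<lambda>z::'a\<Rightarrow>real. z p"] by simp
  qed
  define T where "T = coord_space (P - Pstar) \<inter> S"
  have To: "openin (top_of_set (coord_space (P - Pstar))) T"
    unfolding T_def using \<open>open S\<close> openin_open by blast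
  have y0T: "y0 \<in> T" using y0c d0 by (auto simp: T_def S_def)
  have "T \<subseteq> proj_coords (P - Pstar) ` MPoly"
  proof
    fix z assume zT: "z \<in> T"
    then have zc: "z \<in> coord_space (P - Pstar)" by (simp add: T_def)
    have zb: "\<bar>z p - y0 p\<bar> < d" if "p \<in> P - Pstar" for p
      using zT that by (auto simp: T_def S_def dist_real_def abs_minus_commute)
    have zC: "1 - d < extp z p \<and> extp z p < 1 + d" if "p \<in> C" for p
    proof -
      have "p \<in> P - Pstar" using that part by blast
      then show ?thesis using zb[of p] that by (auto simp: extf_def y0_def)
    qed
    have zO: "rr p - d \<le> extp z p \<and> extp z p \<le> rr p + d" if "p \<in> Pstar \<union> Op" for p
    proof (cases "p \<in> Pstar")
      case True then show ?thesis using d0 by (simp add: extf_def)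
    next
      case False
      then have "p \<in> P - Pstar" "p \<notin> C" using that part disj by blast+
      then show ?thesis using zb[of p] False by (auto simp: extf_def y0_def)
    qed
    have "extp z \<in> MPoly"
      unfolding marked_chain_order_polytope_def
    proof (intro CollectI conjI allI ballI impI)
      fix p assume "p \<notin> P" then show "extp z p = 0" using sub by (auto simp: extf_def)
    next
      fix a assume "a \<in> Pstar" then show "extp z a = rr a" by (simp add: extf_def)
    next
      fix p assume "p \<in> C" then show "0 \<le> extp z p" using zC[of p] d1 by linarith
    next
      fix cs assume as: "saturated_chain P cs \<and> hd cs \<in> Pstar \<union> Op \<and> last cs \<in> Pstar \<union> Op
               \<and> set (butlast (tl cs)) \<subseteq> C"
      define l where "l = butlast (tl cs)"
      have len: "2 \<le> length cs" and succ: "successively (covers P) cs" using as sat_iff by auto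
      have cs: "cs = hd cs # l @ [last cs]" using chain_decomp[OF len] l_def by simp
      have lenl: "length cs = length l + 2" using arg_cong[OF cs, of length] by simp
      have "distinct cs" using chain_distinct[OF chain_sorted[OF succ]] .
      then have "length cs \<le> card P" using chain_set[OF succ len] fin
        by (metis card_mono distinct_card)
      then have "real (length cs) * d \<le> 1" using dn d0
        by (meson dual_order.trans mult_right_mono of_nat_le_iff order_less_imp_le)
      then have k: "real (length l) * d + 2 * d \<le> 1" using lenl by (simp add: algebra_simps)
      have "sum_list (map (extp z) l) \<le> sum_list (map (\<lambda>_. 1 + d) l)"
        using as zC l_def by (intro sum_list_mono) (auto simp: less_imp_le)
      also have "\<dots> = real (length l) + real (length l) * d" by (simp add: sum_list_triv algebra_simps)
      finally have sl: "sum_list (map (extp z) l) \<le> real (length l) + real (length l) * d" .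
      have "r (last cs) - r (hd cs) = int (length l) + 1" using chain_rank[OF rk succ] lenl len by (cases cs) auto
      then have rdiff: "rr (last cs) - rr (hd cs) = real (length l) + 1"
        by (metis of_int_add of_int_diff of_int_of_nat_eq of_int_1)
      have "rr (last cs) - d \<le> extp z (last cs)" "extp z (hd cs) \<le> rr (hd cs) + d"
        using zO as by auto
      then show "sum_list (map (extp z) (butlast (tl cs))) \<le> extp z (last cs) - extp z (hd cs)"
        unfolding l_def[symmetric] using sl rdiff k by linarith
    qed
    moreover have "z = proj_coords (P - Pstar) (extp z)" using ext_proj[OF zc] by simp
    ultimately show "z \<in> proj_coords (P - Pstar) ` MPoly" by blast
  qed
  then show "y0 \<in> interior_in_coords (P - Pstar) (proj_coords (P - Pstar) ` MPoly)"
    unfolding interior_in_coords_def using To y0T by blast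
qed

end

theorem corollary3p2:
  fixes P Pstar C Op :: "'a::order set" and r :: "'a \<Rightarrow> int"
  assumes "finite P"
    and "is_rank_function P r"
    and "Pstar \<subseteq> P"
    and "min_elems P \<union> max_elems P \<subseteq> Pstar"
    and "C \<union> Op = P - Pstar" and "C \<inter> Op = {}"
  shows "\<exists>!y. y \<in> interior_in_coords (P - Pstar)
                 (proj_coords (P - Pstar) `
                    marked_chain_order_polytope P Pstar (\<lambda>a. of_int (r a)) C Op)
            \<and> y \<in> lattice_points (P - Pstar)"
proof (rule ex1I)
  show "(\<lambda>q. if q \<in> C then 1 else if q \<in> P - Pstar then real_of_int (r q) else 0)
      \<in> interior_in_coords (P - Pstar) (proj_coords (P - Pstar) `
            marked_chain_order_polytope P Pstar (\<lambda>a. of_int (r a)) C Op)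
    \<and> (\<lambda>q. if q \<in> C then 1 else if q \<in> P - Pstar then real_of_int (r q) else 0)
      \<in> lattice_points (P - Pstar)"
    using existence[OF assms] by simp
next
  fix y assume "y \<in> interior_in_coords (P - Pstar) (proj_coords (P - Pstar) `
            marked_chain_order_polytope P Pstar (\<lambda>a. of_int (r a)) C Op)
    \<and> y \<in> lattice_points (P - Pstar)"
  then show "y = (\<lambda>q. if q \<in> C then 1 else if q \<in> P - Pstar then real_of_int (r q) else 0)"
    using y_eq[OF assms] by blast
qed

end
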